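(* Let $\mathcal H=\mathcal H_A\otimes\mathcal H_B$ be finite-dimensional with $d=\dim\mathcal H$. Let $H_A(t_i),H_B(t_i),H_A(t_f),H_B(t_f)$ be local Hamiltonians with spectral decompositions $H_X(t_i)=\sum_{l_X}E^i_{l_X}\Pi^i_{l_X}$, $H_X(t_f)=\sum_{k_X}E^f_{k_X}\Pi^f_{k_X}$ ($X=A,B$), let $\Phi$ be a CPTP map on $\mathcal H$ and $\beta>0$. Let $\gamma^X_{\beta,i}=e^{-\beta H_X(t_i)}/\mathcal Z^X_{\beta,i}$, $\gamma^X_{\beta,f}=e^{-\beta H_X(t_f)}/\mathcal Z^X_{\beta,f}$, $\gamma_{\beta,i}=\gamma^A_{\beta,i}\otimes\gamma^B_{\beta,i}$, $\gamma_{\beta,f}=\gamma^A_{\beta,f}\otimes\gamma^B_{\beta,f}$, and $\Delta F=-\beta^{-1}\ln\big(\mathcal Z^A_{\beta,f}\mathcal Z^B_{\beta,f}/(\mathcal Z^A_{\beta,i}\mathcal Z^B_{\beta,i})\big)$. Suppose the initial state is $\rho_i=\gamma^A_{\beta,i}\otimes\gamma^B_{\beta,i}+\mathfrak E_{AB}$ with $\mathfrak E_{AB}$ a Hermitian operator satisfying $\mathrm{Tr}_A\mathfrak E_{AB}=\mathrm{Tr}_B\mathfrak E_{AB}=0$. Then the bipartite EPM average satisfies $$\big\langle e^{-\beta(\Delta E-\Delta F)}\big\rangle=\Big\{d+\mathrm{Tr}\big(\gamma_{\beta,i}^{-1}\mathfrak E_{AB}\big)\Big\}\Big\{\mathrm{Tr}\big(\gamma_{\beta,f}\Phi[\gamma_{\beta,i}]\big)+\mathrm{Tr}\big(\gamma_{\beta,f}\Phi[\mathfrak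 E_{AB}]\big)\Big\}.$$
   Context: Bipartite EPM statistics: with $\mathbf l=(l_A,l_B)$, $\mathbf k=(k_A,k_B)$, the joint distribution is $p^{\mathbf l,\mathbf k}=\mathrm{Tr}(\rho_i\,\Pi^i_{l_A}\otimes\Pi^i_{l_B})\,\mathrm{Tr}(\Phi[\rho_i]\,\Pi^f_{k_A}\otimes\Pi^f_{k_B})$, the energy change is $\Delta E_{\mathbf l,\mathbf k}=E^f_{k_A}+E^f_{k_B}-E^i_{l_A}-E^i_{l_B}$, and $\langle g(\Delta E)\rangle=\sum_{\mathbf l,\mathbf k}p^{\mathbf l,\mathbf k}g(\Delta E_{\mathbf l,\mathbf k})$. $\Phi$ is extended linearly to non-positive operators. *)

theory Defs
  imports Complex_Main "Jordan_Normal_Form.Matrix"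
begin

text \<open>Complex matrices (Jordan_Normal_Form). Tensor product convention:
  basis index of H_A (x) H_B is i*dB + j, with i < dA, j < dB.\<close>

definition mtrace :: "complex mat \<Rightarrow> complex" where
  "mtrace A = (\<Sum>i<dim_row A. A $$ (i,i))"

definition hermitian :: "complex mat \<Rightarrow> bool" where
  "hermitian A \<longleftrightarrow> square_mat A \<and>
     (\<forall>i<dim_row A. \<forall>j<dim_row A. A $$ (i,j) = cnj (A $$ (j,i)))"

definition psd :: "complex mat \<Rightarrow> bool" where
  "psd A \<longleftrightarrow> hermitian A \<and>
     (\<forall>v. let q = (\<Sum>i<dim_row A. \<Sum>j<dim_row A. cnj (v i) * A $$ (i,j) * v j)
          in Im q = 0 \<and> Re q \<ge> 0)"

definition kron :: "complex mat \<Rightarrow> complex mat \<Rightarrow> complex mat" where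
  "kron A B = mat (dim_row A * dim_row B) (dim_col A * dim_col B)
     (\<lambda>(i,j). A $$ (i div dim_row B, j div dim_col B) * B $$ (i mod dim_row B, j mod dim_col B))"

definition ptrace_A :: "nat \<Rightarrow> nat \<Rightarrow> complex mat \<Rightarrow> complex mat" where
  "ptrace_A dA dB E = mat dB dB (\<lambda>(j,j'). \<Sum>i<dA. E $$ (i*dB + j, i*dB + j'))"

definition ptrace_B :: "nat \<Rightarrow> nat \<Rightarrow> complex mat \<Rightarrow> complex mat" where
  "ptrace_B dA dB E = mat dA dA (\<lambda>(i,i'). \<Sum>j<dB. E $$ (i*dB + j, i'*dB + j))"

definition mat_exp :: "complex mat \<Rightarrow> complex mat" where
  "mat_exp A = mat (dim_row A) (dim_col A)
     (\<lambda>(i,j). (\<Sum>k. (A ^\<^sub>m k) $$ (i,j) / of_nat (fact k)))"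

definition minv :: "complex mat \<Rightarrow> complex mat" where
  "minv A = (SOME B. B \<in> carrier_mat (dim_row A) (dim_row A) \<and> inverts_mat A B \<and> inverts_mat B A)"

definition msum :: "nat \<Rightarrow> (nat \<Rightarrow> complex mat) \<Rightarrow> nat set \<Rightarrow> complex mat" where
  "msum n f I = mat n n (\<lambda>(i,j). \<Sum>l\<in>I. f l $$ (i,j))"

definition spectral_decomp :: "nat \<Rightarrow> complex mat \<Rightarrow> nat \<Rightarrow> (nat \<Rightarrow> real) \<Rightarrow> (nat \<Rightarrow> complex mat) \<Rightarrow> bool" where
  "spectral_decomp n H m E P \<longleftrightarrow>
     H \<in> carrier_mat n n \<and>
     (\<forall>l<m. P l \<in> carrier_mat n n \<and> hermitian (P l) \<and> P l * P l = P l \<and> P l \<noteq> 0\<^sub>m n n) \<and>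
     (\<forall>l<m. \<forall>l'<m. l \<noteq> l' \<longrightarrow> P l * P l' = 0\<^sub>m n n) \<and>
     msum n P {..<m} = 1\<^sub>m n \<and>
     inj_on E {..<m} \<and>
     H = msum n (\<lambda>l. complex_of_real (E l) \<cdot>\<^sub>m P l) {..<m}"

text \<open>block (a,b) of size d x d of a (k*d) x (k*d) matrix, and id_k (x) Phi\<close>
definition blk :: "nat \<Rightarrow> complex mat \<Rightarrow> nat \<Rightarrow> nat \<Rightarrow> complex mat" where
  "blk d X a b = mat d d (\<lambda>(p,q). X $$ (a*d + p, b*d + q))"

definition ampl :: "nat \<Rightarrow> nat \<Rightarrow> (complex mat \<Rightarrow> complex mat) \<Rightarrow> complex mat \<Rightarrow> complex mat" where
  "ampl d k \<Phi> X = mat (k*d) (k*d) (\<lambda>(i,j). \<Phi> (blk d X (i div d) (j div d)) $$ (i mod d, j mod d))"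

definition CPTP :: "nat \<Rightarrow> (complex mat \<Rightarrow> complex mat) \<Rightarrow> bool" where
  "CPTP d \<Phi> \<longleftrightarrow>
     (\<forall>X \<in> carrier_mat d d. \<Phi> X \<in> carrier_mat d d) \<and>
     (\<forall>X \<in> carrier_mat d d. \<forall>Y \<in> carrier_mat d d. \<forall>c.
         \<Phi> (c \<cdot>\<^sub>m X + Y) = c \<cdot>\<^sub>m \<Phi> X + \<Phi> Y) \<and>
     (\<forall>X \<in> carrier_mat d d. mtrace (\<Phi> X) = mtrace X) \<and>
     (\<forall>k. \<forall>X \<in> carrier_mat (k*d) (k*d). psd X \<longrightarrow> psd (ampl d k \<Phi> X))"

definition partition_fn :: "real \<Rightarrow> complex mat \<Rightarrow> real" where
  "partition_fn \<beta> H = Re (mtrace (mat_exp (complex_of_real (-\<beta>) \<cdot>\<^sub>m H)))"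

definition gibbs :: "real \<Rightarrow> complex mat \<Rightarrow> complex mat" where
  "gibbs \<beta> H = complex_of_real (1 / partition_fn \<beta> H) \<cdot>\<^sub>m mat_exp (complex_of_real (-\<beta>) \<cdot>\<^sub>m H)"

definition epm_avg ::
  "complex mat \<Rightarrow> (complex mat \<Rightarrow> complex mat) \<Rightarrow>
   nat \<Rightarrow> (nat \<Rightarrow> real) \<Rightarrow> (nat \<Rightarrow> complex mat) \<Rightarrow>
   nat \<Rightarrow> (nat \<Rightarrow> real) \<Rightarrow> (nat \<Rightarrow> complex mat) \<Rightarrow>
   nat \<Rightarrow> (nat \<Rightarrow> real) \<Rightarrow> (nat \<Rightarrow> complex mat) \<Rightarrow>
   nat \<Rightarrow> (nat \<Rightarrow> real) \<Rightarrow> (nat \<Rightarrow> complex mat) \<Rightarrow> (real \<Rightarrow> real) \<Rightarrow> complex" where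
  "epm_avg \<rho> \<Phi> miA EiA PiA miB EiB PiB mfA EfA PfA mfB EfB PfB g =
     (\<Sum>lA<miA. \<Sum>lB<miB. \<Sum>kA<mfA. \<Sum>kB<mfB.
        mtrace (\<rho> * kron (PiA lA) (PiB lB)) * mtrace (\<Phi> \<rho> * kron (PfA kA) (PfB kB))
        * complex_of_real (g (EfA kA + EfB kB - EiA lA - EiB lB)))"

end

theory Submission
  imports Defs
begin

lemma mult_entry:
  assumes "A \<in> carrier_mat n k" "B \<in> carrier_mat k m" "i < n" "j < m"
  shows "(A * B) $$ (i,j) = (\<Sum>t<k. A $$ (i,t) * B $$ (t,j))"
  using assms by (auto simp: scalar_prod_def atLeast0LessThan)

lemma msum_index[simp]:
  "i < n \<Longrightarrow> j < n \<Longrightarrow> msum n f I $$ (i,j) = (\<Sum>l\<in>I. f l $$ (i,j))"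
  by (simp add: msum_def)

lemma msum_carrier[simp]: "msum n f I \<in> carrier_mat n n"
  by (simp add: msum_def)

lemma msum_dim[simp]: "dim_row (msum n f I) = n" "dim_col (msum n f I) = n"
  by (simp_all add: msum_def)

lemma msum_smult_index:
  assumes "\<forall>l\<in>I. P l \<in> carrier_mat n n" "i < n" "j < n"
  shows "msum n (\<lambda>l. a l \<cdot>\<^sub>m P l) I $$ (i,j) = (\<Sum>l\<in>I. a l * P l $$ (i,j))"
  using assms by (auto intro!: sum.cong)

lemma sum_swap3:
  "(\<Sum>t\<in>T. \<Sum>l\<in>L. \<Sum>l'\<in>L'. f t l l') = (\<Sum>l\<in>L. \<Sum>l'\<in>L'. \<Sum>t\<in>T. f t l l')"
  by (subst sum.swap) (simp add: sum.swap[of _ T])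

lemma mtrace_mult_comm:
  assumes "A \<in> carrier_mat n n" "B \<in> carrier_mat n n"
  shows "mtrace (A * B) = mtrace (B * A)"
proof -
  have "mtrace (A * B) = (\<Sum>i<n. (A*B) $$ (i,i))"
    using assms by (simp add: mtrace_def)
  also have "\<dots> = (\<Sum>i<n. \<Sum>t<n. A $$ (i,t) * B $$ (t,i))"
    using assms by (intro sum.cong refl mult_entry) auto
  also have "\<dots> = (\<Sum>t<n. \<Sum>i<n. B $$ (t,i) * A $$ (i,t))"
    by (subst sum.swap) (simp add: mult.commute)
  also have "\<dots> = (\<Sum>i<n. (B*A) $$ (i,i))"
    using assms by (intro sum.cong refl mult_entry[symmetric]) auto
  also have "\<dots> = mtrace (B * A)"
    using assms by (simp add: mtrace_def)
  finally show ?thesis .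
qed

lemma mtrace_add:
  assumes "A \<in> carrier_mat n n" "B \<in> carrier_mat n n"
  shows "mtrace (A + B) = mtrace A + mtrace B"
  using assms by (simp add: mtrace_def sum.distrib)

lemma mtrace_one: "mtrace (1\<^sub>m n) = of_nat n"
  by (simp add: mtrace_def)

lemma msum_scaled_mult:
  assumes P: "\<forall>l<m. P l \<in> carrier_mat n n \<and> P l * P l = P l"
    and orth: "\<forall>l<m. \<forall>l'<m. l \<noteq> l' \<longrightarrow> P l * P l' = 0\<^sub>m n n"
  shows "msum n (\<lambda>l. a l \<cdot>\<^sub>m P l) {..<m} * msum n (\<lambda>l. b l \<cdot>\<^sub>m P l) {..<m}
       = msum n (\<lambda>l. (a l * b l) \<cdot>\<^sub>m P l) {..<m}"
proof (rule eq_matI)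
  fix i j assume ij: "i < dim_row (msum n (\<lambda>l. (a l * b l) \<cdot>\<^sub>m P l) {..<m})"
    "j < dim_col (msum n (\<lambda>l. (a l * b l) \<cdot>\<^sub>m P l) {..<m})"
  hence i: "i < n" and j: "j < n" by auto
  have dims: "dim_row (P l) = n" "dim_col (P l) = n" if "l < m" for l using P that by auto
  have pe: "(P l * P l') $$ (i,j) = (\<Sum>t<n. P l $$ (i,t) * P l' $$ (t,j))" if "l < m" "l' < m" for l l'
    using P that i j by (intro mult_entry) auto
  have "(msum n (\<lambda>l. a l \<cdot>\<^sub>m P l) {..<m} * msum n (\<lambda>l. b l \<cdot>\<^sub>m P l) {..<m}) $$ (i,j)
      = (\<Sum>t<n. (\<Sum>l<m. a l * P l $$ (i,t)) * (\<Sum>l'<m. b l' * P l' $$ (t,j)))"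
    using i j P by (subst mult_entry[of _ n n _ n]) (auto simp: msum_smult_index simp del: msum_index intro!: sum.cong)
  also have "\<dots> = (\<Sum>t<n. \<Sum>l<m. \<Sum>l'<m. a l * b l' * (P l $$ (i,t) * P l' $$ (t,j)))"
    by (simp add: sum_product mult_ac)
  also have "\<dots> = (\<Sum>l<m. \<Sum>l'<m. \<Sum>t<n. a l * b l' * (P l $$ (i,t) * P l' $$ (t,j)))"
    by (rule sum_swap3)
  also have "\<dots> = (\<Sum>l<m. \<Sum>l'<m. a l * b l' * (\<Sum>t<n. P l $$ (i,t) * P l' $$ (t,j)))"
    by (simp add: sum_distrib_left)
  also have "\<dots> = (\<Sum>l<m. \<Sum>l'<m. a l * b l' * (if l' = l then P l $$ (i,j) else 0))"
  proof (intro sum.cong refl)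
    fix l l' assume "l \<in> {..<m}" "l' \<in> {..<m}"
    thus "a l * b l' * (\<Sum>t<n. P l $$ (i,t) * P l' $$ (t,j)) = a l * b l' * (if l' = l then P l $$ (i,j) else 0)"
      using pe[of l l'] P orth i j by auto
  qed
  also have "\<dots> = (\<Sum>l<m. (a l * b l) * P l $$ (i,j))"
    by (simp add: if_distrib cong: if_cong)
  also have "\<dots> = msum n (\<lambda>l. (a l * b l) \<cdot>\<^sub>m P l) {..<m} $$ (i,j)"
    using P i j by (simp add: msum_smult_index del: msum_index)
  finally show "(msum n (\<lambda>l. a l \<cdot>\<^sub>m P l) {..<m} * msum n (\<lambda>l. b l \<cdot>\<^sub>m P l) {..<m}) $$ (i,j)
       = msum n (\<lambda>l. (a l * b l) \<cdot>\<^sub>m P l) {..<m} $$ (i,j)" .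
qed auto

lemma exp_sums_c: "(\<lambda>k. (z::complex)^k / of_nat (fact k)) sums exp z"
  using exp_converges[of z] by (simp add: scaleR_conv_of_real divide_inverse mult.commute)

lemma msum_cong: "(\<And>l. l \<in> I \<Longrightarrow> f l = g l) \<Longrightarrow> msum n f I = msum n g I"
  by (simp add: msum_def)

lemma msum_pow:
  assumes P: "\<forall>l<m. P l \<in> carrier_mat n n \<and> P l * P l = P l"
    and orth: "\<forall>l<m. \<forall>l'<m. l \<noteq> l' \<longrightarrow> P l * P l' = 0\<^sub>m n n"
    and one: "msum n P {..<m} = 1\<^sub>m n"
  shows "msum n (\<lambda>l. a l \<cdot>\<^sub>m P l) {..<m} ^\<^sub>m k = msum n (\<lambda>l. a l ^ k \<cdot>\<^sub>m P l) {..<m}"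
proof (induction k)
  case 0
  have "msum n (\<lambda>l. a l ^ 0 \<cdot>\<^sub>m P l) {..<m} = msum n P {..<m}"
    using P by (intro msum_cong) (auto intro!: eq_matI)
  then show ?case using one by simp
next
  case (Suc k)
  show ?case using msum_scaled_mult[OF P orth, of "\<lambda>l. a l ^ k" a] Suc
    by (simp add: power_Suc2 mult.commute)
qed

lemma smult_msum:
  assumes "\<forall>l\<in>I. P l \<in> carrier_mat n n"
  shows "c \<cdot>\<^sub>m msum n (\<lambda>l. a l \<cdot>\<^sub>m P l) I = msum n (\<lambda>l. (c * a l) \<cdot>\<^sub>m P l) I"
  using assms by (intro eq_matI) (auto simp: msum_smult_index sum_distrib_left mult_ac simp del: msum_index)

lemma spec_smult:
  assumes "spectral_decomp n H m E P"
  shows "c \<cdot>\<^sub>m H = msum n (\<lambda>l. (c * complex_of_real (E l)) \<cdot>\<^sub>m P l) {..<m}"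
  using assms unfolding spectral_decomp_def by (auto intro!: smult_msum)

lemma mat_exp_spec:
  assumes S: "spectral_decomp n H m E P"
  shows "mat_exp (complex_of_real x \<cdot>\<^sub>m H) = msum n (\<lambda>l. complex_of_real (exp (x * E l)) \<cdot>\<^sub>m P l) {..<m}"
proof -
  from S have P: "\<forall>l<m. P l \<in> carrier_mat n n \<and> P l * P l = P l"
    and orth: "\<forall>l<m. \<forall>l'<m. l \<noteq> l' \<longrightarrow> P l * P l' = 0\<^sub>m n n"
    and one: "msum n P {..<m} = 1\<^sub>m n" and H: "H \<in> carrier_mat n n"
    unfolding spectral_decomp_def by auto
  define a where "a l = complex_of_real x * complex_of_real (E l)" for l
  have eq: "complex_of_real x \<cdot>\<^sub>m H = msum n (\<lambda>l. a l \<cdot>\<^sub>m P l) {..<m}"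
    using spec_smult[OF S] by (simp add: a_def)
  show ?thesis
  proof (rule eq_matI)
    fix i j assume "i < dim_row (msum n (\<lambda>l. complex_of_real (exp (x * E l)) \<cdot>\<^sub>m P l) {..<m})"
      "j < dim_col (msum n (\<lambda>l. complex_of_real (exp (x * E l)) \<cdot>\<^sub>m P l) {..<m})"
    hence i: "i < n" and j: "j < n" by auto
    have Pc: "\<forall>l\<in>{..<m}. P l \<in> carrier_mat n n" using P by auto
    have "mat_exp (complex_of_real x \<cdot>\<^sub>m H) $$ (i,j)
        = (\<Sum>k. (msum n (\<lambda>l. a l \<cdot>\<^sub>m P l) {..<m} ^\<^sub>m k) $$ (i,j) / of_nat (fact k))"
      using i j H unfolding eq by (simp add: mat_exp_def)
    also have "\<dots> = (\<Sum>k. \<Sum>l<m. P l $$ (i,j) * (a l ^ k / of_nat (fact k)))"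
      unfolding msum_pow[OF P orth one]
      by (simp add: msum_smult_index[OF Pc i j] sum_divide_distrib mult_ac del: msum_index of_nat_fact)
    also have "\<dots> = (\<Sum>l<m. P l $$ (i,j) * exp (a l))"
      by (rule sums_unique[symmetric], rule sums_sum, rule sums_mult, rule exp_sums_c)
    also have "\<dots> = msum n (\<lambda>l. complex_of_real (exp (x * E l)) \<cdot>\<^sub>m P l) {..<m} $$ (i,j)"
      by (simp add: msum_smult_index[OF Pc i j] a_def exp_of_real[symmetric] mult_ac del: msum_index)
    finally show "mat_exp (complex_of_real x \<cdot>\<^sub>m H) $$ (i,j) = msum n (\<lambda>l. complex_of_real (exp (x * E l)) \<cdot>\<^sub>m P l) {..<m} $$ (i,j)" .
  qed (use H in \<open>auto simp: mat_exp_def\<close>)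
qed

lemma proj_trace:
  assumes C: "P \<in> carrier_mat n n" and h: "hermitian P" and idem: "P * P = P" and nz: "P \<noteq> 0\<^sub>m n n"
  shows "\<exists>r>0. mtrace P = complex_of_real r"
proof -
  have herm: "P $$ (t,i) = cnj (P $$ (i,t))" if "i < n" "t < n" for i t
  proof -
    have "dim_row P = n" using C by auto
    thus ?thesis using h that unfolding hermitian_def by blast
  qed
  have "mtrace P = (\<Sum>i<n. (P * P) $$ (i,i))" using C idem by (simp add: mtrace_def)
  also have "\<dots> = (\<Sum>i<n. \<Sum>t<n. P $$ (i,t) * P $$ (t,i))"
    using C by (intro sum.cong refl mult_entry) auto
  also have "\<dots> = (\<Sum>i<n. \<Sum>t<n. complex_of_real ((norm (P $$ (i,t)))^2))"
  proof (intro sum.cong refl)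
    fix i t assume "i \<in> {..<n}" "t \<in> {..<n}"
    hence "P $$ (t,i) = cnj (P $$ (i,t))" using herm by blast
    hence "P $$ (i,t) * P $$ (t,i) = P $$ (i,t) * cnj (P $$ (i,t))"
      by (rule arg_cong[where f="\<lambda>z. P $$ (i,t) * z"])
    thus "P $$ (i,t) * P $$ (t,i) = complex_of_real ((norm (P $$ (i,t)))^2)"
      by (simp only: complex_norm_square)
  qed
  also have "\<dots> = complex_of_real (\<Sum>i<n. \<Sum>t<n. (norm (P $$ (i,t)))^2)" by simp
  finally have tr: "mtrace P = complex_of_real (\<Sum>i<n. \<Sum>t<n. (norm (P $$ (i,t)))^2)" .
  obtain i0 t0 where it: "i0 < n" "t0 < n" "P $$ (i0,t0) \<noteq> 0"
  proof (rule ccontr)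
    assume "\<not> thesis"
    hence "\<forall>i<n. \<forall>t<n. P $$ (i,t) = 0" using that by blast
    hence "P = 0\<^sub>m n n" using C by (intro eq_matI) auto
    thus False using nz by simp
  qed
  have A: "0 < (\<Sum>t<n. (norm (P $$ (i0,t)))^2)"
    using it by (intro sum_pos2[of _ t0]) auto
  have "0 < (\<Sum>i<n. \<Sum>t<n. (norm (P $$ (i,t)))^2)"
    by (rule sum_pos2[where I="{..<n}" and i=i0 and f="\<lambda>i. (\<Sum>t<n. (norm (P $$ (i,t)))^2)"]) (use it A in \<open>auto intro: sum_nonneg\<close>)
  thus ?thesis using tr by blast
qed

lemma spec_m_pos:
  assumes S: "spectral_decomp n H m E P" and n: "n \<ge> 1"
  shows "m > 0"
proof (rule ccontr)
  assume "\<not> m > 0" hence "m = 0" by simp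
  hence "msum n P {..<m} $$ (0,0) = 0" using n by simp
  moreover have "msum n P {..<m} = 1\<^sub>m n" using S unfolding spectral_decomp_def by auto
  ultimately show False using n by simp
qed

lemma mtrace_msum:
  assumes "\<forall>l\<in>I. P l \<in> carrier_mat n n"
  shows "mtrace (msum n (\<lambda>l. a l \<cdot>\<^sub>m P l) I) = (\<Sum>l\<in>I. a l * mtrace (P l))"
proof -
  have "mtrace (msum n (\<lambda>l. a l \<cdot>\<^sub>m P l) I) = (\<Sum>i<n. \<Sum>l\<in>I. a l * P l $$ (i,i))"
    using assms unfolding mtrace_def by (simp add: msum_smult_index del: msum_index)
  also have "\<dots> = (\<Sum>l\<in>I. \<Sum>i<n. a l * P l $$ (i,i))" by (rule sum.swap)
  also have "\<dots> = (\<Sum>l\<in>I. a l * mtrace (P l))"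
    using assms unfolding mtrace_def by (auto simp: sum_distrib_left intro!: sum.cong)
  finally show ?thesis .
qed

lemma partition_pos:
  assumes S: "spectral_decomp n H m E P" and n: "n \<ge> 1"
  shows "partition_fn \<beta> H > 0"
proof -
  from S have Pc: "\<forall>l\<in>{..<m}. P l \<in> carrier_mat n n" unfolding spectral_decomp_def by auto
  have "\<forall>l\<in>{..<m}. \<exists>r>0. mtrace (P l) = complex_of_real r"
    using S unfolding spectral_decomp_def by (auto intro!: proj_trace)
  then obtain r where r0: "\<forall>l\<in>{..<m}. r l > 0 \<and> mtrace (P l) = complex_of_real (r l)"
    by (auto dest!: bchoice)
  hence r: "\<And>l. l \<in> {..<m} \<Longrightarrow> r l > 0 \<and> mtrace (P l) = complex_of_real (r l)" by blast
  have "partition_fn \<beta> H = Re (\<Sum>l<m. complex_of_real (exp (-\<beta> * E l)) * mtrace (P l))"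
    unfolding partition_fn_def mat_exp_spec[OF S] mtrace_msum[OF Pc] ..
  also have "\<dots> = (\<Sum>l<m. exp (-\<beta> * E l) * r l)"
    using r by (simp add: Re_sum)
  also have "\<dots> > 0"
    using spec_m_pos[OF S n] r by (intro sum_pos2[of _ 0]) (auto intro: less_imp_le)
  finally show ?thesis .
qed

lemma gibbs_spec:
  assumes S: "spectral_decomp n H m E P"
  shows "gibbs \<beta> H = msum n (\<lambda>l. complex_of_real (exp (-\<beta> * E l) / partition_fn \<beta> H) \<cdot>\<^sub>m P l) {..<m}"
proof -
  from S have Pc: "\<forall>l\<in>{..<m}. P l \<in> carrier_mat n n" unfolding spectral_decomp_def by auto
  show ?thesis unfolding gibbs_def mat_exp_spec[OF S] smult_msum[OF Pc]
    by (intro msum_cong) (simp add: divide_inverse mult.commute)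
qed

lemma sum_divmod:
  "(\<Sum>t<a*b. f (t div b) (t mod b)) = (\<Sum>s<a. \<Sum>r<b. f s (r::nat))"
proof (induction a)
  case 0 then show ?case by simp
next
  case (Suc a)
  let ?g = "\<lambda>t. f (t div b) (t mod b)"
  have U: "{..<Suc a * b} = {..<a*b} \<union> ((\<lambda>r. a*b + r) ` {..<b})"
  proof (intro equalityI subsetI)
    fix x assume x: "x \<in> {..<Suc a * b}"
    show "x \<in> {..<a*b} \<union> ((\<lambda>r. a*b + r) ` {..<b})"
    proof (cases "x < a*b")
      case False
      hence "x = a*b + (x - a*b)" "x - a*b < b" using x by auto
      thus ?thesis by blast
    qed simp
  qed auto
  have "sum ?g {..<Suc a * b} = sum ?g {..<a*b} + sum ?g ((\<lambda>r. a*b + r) ` {..<b})"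
    unfolding U by (rule sum.union_disjoint) auto
  also have "sum ?g ((\<lambda>r. a*b + r) ` {..<b}) = (\<Sum>r<b. ?g (a*b + r))"
    by (subst sum.reindex) (auto simp: inj_on_def)
  also have "\<dots> = (\<Sum>r<b. f a r)"
  proof (rule sum.cong[OF refl])
    fix r assume "r \<in> {..<b}"
    hence "(a*b + r) div b = a" "(a*b + r) mod b = r" by auto
    thus "?g (a*b + r) = f a r" by simp
  qed
  finally show ?case using Suc by simp
qed

lemma kron_dim[simp]: "dim_row (kron A B) = dim_row A * dim_row B" "dim_col (kron A B) = dim_col A * dim_col B"
  by (simp_all add: kron_def)

lemma kron_carrier: "A \<in> carrier_mat a a \<Longrightarrow> B \<in> carrier_mat b b \<Longrightarrow> kron A B \<in> carrier_mat (a*b) (a*b)"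
  by (auto simp: kron_def)

lemma kron_index:
  assumes "A \<in> carrier_mat a a" "B \<in> carrier_mat b b" "i < a*b" "j < a*b"
  shows "kron A B $$ (i,j) = A $$ (i div b, j div b) * B $$ (i mod b, j mod b)"
  using assms by (auto simp: kron_def)

lemma divmod_lt: "i < a*b \<Longrightarrow> i div b < (a::nat)" "i < a*b \<Longrightarrow> i mod b < (b::nat)"
  by (auto simp: less_mult_imp_div_less) (metis mod_less_divisor mult_0_right not_less0 gr0I)

lemma kron_mult:
  assumes A: "A \<in> carrier_mat a a" and C: "C \<in> carrier_mat a a"
    and B: "B \<in> carrier_mat b b" and D: "D \<in> carrier_mat b b"
  shows "kron A B * kron C D = kron (A*C) (B*D)"
proof (rule eq_matI)
  fix i j assume "i < dim_row (kron (A*C) (B*D))" "j < dim_col (kron (A*C) (B*D))"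
  hence i: "i < a*b" and j: "j < a*b" using A B C D by auto
  note dm = divmod_lt[OF i] divmod_lt[OF j]
  have "(kron A B * kron C D) $$ (i,j) = (\<Sum>t<a*b. kron A B $$ (i,t) * kron C D $$ (t,j))"
    by (rule mult_entry[OF kron_carrier[OF A B] kron_carrier[OF C D] i j])
  also have "\<dots> = (\<Sum>t<a*b. (A $$ (i div b, t div b) * C $$ (t div b, j div b)) * (B $$ (i mod b, t mod b) * D $$ (t mod b, j mod b)))"
    using A B C D i j by (intro sum.cong refl) (simp add: kron_index mult_ac)
  also have "\<dots> = (\<Sum>s<a. \<Sum>r<b. (A $$ (i div b, s) * C $$ (s, j div b)) * (B $$ (i mod b, r) * D $$ (r, j mod b)))"
    by (rule sum_divmod)
  also have "\<dots> = (\<Sum>s<a. A $$ (i div b, s) * C $$ (s, j div b)) * (\<Sum>r<b. B $$ (i mod b, r) * D $$ (r, j mod b))"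
    by (simp add: sum_product)
  also have "\<dots> = (A*C) $$ (i div b, j div b) * (B*D) $$ (i mod b, j mod b)"
    using A B C D dm by (simp add: mult_entry[of _ a a _ a] mult_entry[of _ b b _ b] del: index_mult_mat)
  also have "\<dots> = kron (A*C) (B*D) $$ (i,j)"
    using A B C D i j by (intro kron_index[symmetric]) auto
  finally show "(kron A B * kron C D) $$ (i,j) = kron (A*C) (B*D) $$ (i,j)" .
qed (use A B C D in auto)

lemma kron_one:
  assumes "b > 0"
  shows "kron (1\<^sub>m a) (1\<^sub>m b) = 1\<^sub>m (a*b)"
proof (rule eq_matI)
  fix i j assume "i < dim_row (1\<^sub>m (a*b))" "j < dim_col (1\<^sub>m (a*b))"
  hence i: "i < a*b" and j: "j < a*b" by auto
  note dm = divmod_lt[OF i] divmod_lt[OF j]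
  have "(i div b = j div b \<and> i mod b = j mod b) \<longleftrightarrow> i = j"
    by (metis div_mult_mod_eq)
  thus "kron (1\<^sub>m a) (1\<^sub>m b) $$ (i,j) = 1\<^sub>m (a*b) $$ (i,j)"
    using i j dm by (auto simp: kron_index[of _ a _ b])
qed auto

lemma trace_lin:
  assumes X: "X \<in> carrier_mat N N" and fin: "finite I" and Y: "\<forall>l\<in>I. Y l \<in> carrier_mat N N"
    and Z: "Z \<in> carrier_mat N N" and ZY: "\<forall>i<N. \<forall>j<N. Z $$ (i,j) = (\<Sum>l\<in>I. c l * Y l $$ (i,j))"
  shows "mtrace (X * Z) = (\<Sum>l\<in>I. c l * mtrace (X * Y l))"
proof -
  have "mtrace (X * Z) = (\<Sum>i<N. (X * Z) $$ (i,i))"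
    unfolding mtrace_def using X by simp
  also have "\<dots> = (\<Sum>i<N. \<Sum>t<N. X $$ (i,t) * Z $$ (t,i))"
    using X Z by (intro sum.cong refl mult_entry) auto
  also have "\<dots> = (\<Sum>i<N. \<Sum>t<N. \<Sum>l\<in>I. c l * (X $$ (i,t) * Y l $$ (t,i)))"
    using ZY by (simp add: sum_distrib_left mult_ac)
  also have "\<dots> = (\<Sum>i<N. \<Sum>l\<in>I. \<Sum>t<N. c l * (X $$ (i,t) * Y l $$ (t,i)))"
    by (rule sum.cong[OF refl], rule sum.swap)
  also have "\<dots> = (\<Sum>l\<in>I. \<Sum>i<N. \<Sum>t<N. c l * (X $$ (i,t) * Y l $$ (t,i)))"
    by (rule sum.swap)
  also have "\<dots> = (\<Sum>l\<in>I. c l * mtrace (X * Y l))"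
  proof (rule sum.cong[OF refl])
    fix l assume l: "l \<in> I"
    have Yl: "Y l \<in> carrier_mat N N" using Y l by auto
    have "mtrace (X * Y l) = (\<Sum>i<N. (X * Y l) $$ (i,i))"
      unfolding mtrace_def using X by simp
    also have "\<dots> = (\<Sum>i<N. \<Sum>t<N. X $$ (i,t) * Y l $$ (t,i))"
      using X Yl by (intro sum.cong refl mult_entry) auto
    finally have "mtrace (X * Y l) = (\<Sum>i<N. \<Sum>t<N. X $$ (i,t) * Y l $$ (t,i))" .
    thus "(\<Sum>i<N. \<Sum>t<N. c l * (X $$ (i,t) * Y l $$ (t,i))) = c l * mtrace (X * Y l)"
      by (simp add: sum_distrib_left)
  qed
  finally show ?thesis .
qed

lemma trace_kron_msum:
  assumes X: "X \<in> carrier_mat (a*b) (a*b)"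
    and PA: "\<forall>l<mA. PA l \<in> carrier_mat a a" and PB: "\<forall>l<mB. PB l \<in> carrier_mat b b"
  shows "mtrace (X * kron (msum a (\<lambda>l. cA l \<cdot>\<^sub>m PA l) {..<mA}) (msum b (\<lambda>l. cB l \<cdot>\<^sub>m PB l) {..<mB}))
     = (\<Sum>lA<mA. \<Sum>lB<mB. cA lA * cB lB * mtrace (X * kron (PA lA) (PB lB)))"
proof -
  have "mtrace (X * kron (msum a (\<lambda>l. cA l \<cdot>\<^sub>m PA l) {..<mA}) (msum b (\<lambda>l. cB l \<cdot>\<^sub>m PB l) {..<mB}))
     = (\<Sum>p\<in>{..<mA}\<times>{..<mB}. (cA (fst p) * cB (snd p)) * mtrace (X * kron (PA (fst p)) (PB (snd p))))"
  proof (rule trace_lin[OF X])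
    show "\<forall>p\<in>{..<mA}\<times>{..<mB}. kron (PA (fst p)) (PB (snd p)) \<in> carrier_mat (a*b) (a*b)"
      using PA PB by (auto intro: kron_carrier)
    show "kron (msum a (\<lambda>l. cA l \<cdot>\<^sub>m PA l) {..<mA}) (msum b (\<lambda>l. cB l \<cdot>\<^sub>m PB l) {..<mB}) \<in> carrier_mat (a*b) (a*b)"
      by (intro kron_carrier) auto
    show "\<forall>i<a*b. \<forall>j<a*b. kron (msum a (\<lambda>l. cA l \<cdot>\<^sub>m PA l) {..<mA}) (msum b (\<lambda>l. cB l \<cdot>\<^sub>m PB l) {..<mB}) $$ (i,j)
       = (\<Sum>p\<in>{..<mA}\<times>{..<mB}. (cA (fst p) * cB (snd p)) * kron (PA (fst p)) (PB (snd p)) $$ (i,j))"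
    proof (intro allI impI)
      fix i j assume i: "i < a*b" and j: "j < a*b"
      note dm = divmod_lt[OF i] divmod_lt[OF j]
      have PA': "\<forall>l\<in>{..<mA}. PA l \<in> carrier_mat a a" and PB': "\<forall>l\<in>{..<mB}. PB l \<in> carrier_mat b b"
        using PA PB by auto
      have "kron (msum a (\<lambda>l. cA l \<cdot>\<^sub>m PA l) {..<mA}) (msum b (\<lambda>l. cB l \<cdot>\<^sub>m PB l) {..<mB}) $$ (i,j)
         = (\<Sum>l<mA. cA l * PA l $$ (i div b, j div b)) * (\<Sum>l<mB. cB l * PB l $$ (i mod b, j mod b))"
        using i j dm by (simp add: kron_index[of _ a _ b] msum_smult_index[OF PA'] msum_smult_index[OF PB'] del: msum_index)
      also have "\<dots> = (\<Sum>p\<in>{..<mA}\<times>{..<mB}. (cA (fst p) * PA (fst p) $$ (i div b, j div b)) * (cB (snd p) * PB (snd p) $$ (i mod b, j mod b)))"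
        by (simp add: sum_product sum.cartesian_product split_def)
      also have "\<dots> = (\<Sum>p\<in>{..<mA}\<times>{..<mB}. (cA (fst p) * cB (snd p)) * kron (PA (fst p)) (PB (snd p)) $$ (i,j))"
        using PA PB i j by (intro sum.cong refl) (auto simp: kron_index[of _ a _ b] mult_ac)
      finally show "kron (msum a (\<lambda>l. cA l \<cdot>\<^sub>m PA l) {..<mA}) (msum b (\<lambda>l. cB l \<cdot>\<^sub>m PB l) {..<mB}) $$ (i,j)
       = (\<Sum>p\<in>{..<mA}\<times>{..<mB}. (cA (fst p) * cB (snd p)) * kron (PA (fst p)) (PB (snd p)) $$ (i,j))" .
    qed
  qed auto
  also have "\<dots> = (\<Sum>lA<mA. \<Sum>lB<mB. cA lA * cB lB * mtrace (X * kron (PA lA) (PB lB)))"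
    by (simp add: sum.cartesian_product split_def)
  finally show ?thesis .
qed

lemma msum_one_smult:
  assumes "\<forall>l<m. P l \<in> carrier_mat n n"
  shows "msum n (\<lambda>l. 1 \<cdot>\<^sub>m P l) {..<m} = msum n P {..<m}"
  using assms by (intro msum_cong) (auto intro!: eq_matI)

lemma spec_inv:
  assumes S: "spectral_decomp n H m E P" and ab: "\<forall>l<m. a l * b l = 1"
  shows "msum n (\<lambda>l. a l \<cdot>\<^sub>m P l) {..<m} * msum n (\<lambda>l. b l \<cdot>\<^sub>m P l) {..<m} = 1\<^sub>m n"
proof -
  from S have P: "\<forall>l<m. P l \<in> carrier_mat n n \<and> P l * P l = P l"
    and orth: "\<forall>l<m. \<forall>l'<m. l \<noteq> l' \<longrightarrow> P l * P l' = 0\<^sub>m n n"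
    and one: "msum n P {..<m} = 1\<^sub>m n"
    unfolding spectral_decomp_def by auto
  have "msum n (\<lambda>l. a l \<cdot>\<^sub>m P l) {..<m} * msum n (\<lambda>l. b l \<cdot>\<^sub>m P l) {..<m}
      = msum n (\<lambda>l. (a l * b l) \<cdot>\<^sub>m P l) {..<m}"
    by (rule msum_scaled_mult[OF P orth])
  also have "\<dots> = msum n (\<lambda>l. 1 \<cdot>\<^sub>m P l) {..<m}"
    using ab by (intro msum_cong) auto
  also have "\<dots> = 1\<^sub>m n" using msum_one_smult[of m P n] P one by auto
  finally show ?thesis .
qed

lemma exp_factor:
  fixes \<beta> ZiA ZiB ZfA ZfB a b c d :: real
  assumes "\<beta> > 0" "ZiA > 0" "ZiB > 0" "ZfA > 0" "ZfB > 0"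
  shows "exp (- \<beta> * ((c + d - a - b) - (- (1 / \<beta>) * ln ((ZfA * ZfB) / (ZiA * ZiB)))))
     = (ZiA * exp (\<beta> * a)) * (ZiB * exp (\<beta> * b)) * (exp (- \<beta> * c) / ZfA) * (exp (- \<beta> * d) / ZfB)"
proof -
  define R where "R = (ZfA * ZfB) / (ZiA * ZiB)"
  have R: "R > 0" using assms by (simp add: R_def)
  have "- \<beta> * ((c + d - a - b) - (- (1 / \<beta>) * ln R)) = \<beta> * a + \<beta> * b + (- \<beta> * c) + (- \<beta> * d) - ln R"
    using assms by (simp add: field_simps)
  hence "exp (- \<beta> * ((c + d - a - b) - (- (1 / \<beta>) * ln R))) = exp (\<beta> * a) * exp (\<beta> * b) * exp (- \<beta> * c) * exp (- \<beta> * d) / R"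
    using R by (simp add: exp_add exp_diff exp_minus field_simps)
  also have "\<dots> = (ZiA * exp (\<beta> * a)) * (ZiB * exp (\<beta> * b)) * (exp (- \<beta> * c) / ZfA) * (exp (- \<beta> * d) / ZfB)"
    using assms by (simp add: R_def field_simps)
  finally show ?thesis by (simp add: R_def)
qed

lemma sum4_factor:
  "(\<Sum>a\<in>A. \<Sum>b\<in>B. \<Sum>c\<in>C. \<Sum>d\<in>D. (f a b :: complex) * g c d) = (\<Sum>a\<in>A. \<Sum>b\<in>B. f a b) * (\<Sum>c\<in>C. \<Sum>d\<in>D. g c d)"
proof -
  have "(\<Sum>a\<in>A. \<Sum>b\<in>B. f a b) * (\<Sum>c\<in>C. \<Sum>d\<in>D. g c d) = (\<Sum>a\<in>A. \<Sum>b\<in>B. f a b * (\<Sum>c\<in>C. \<Sum>d\<in>D. g c d))"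
    by (simp only: sum_distrib_right)
  also have "\<dots> = (\<Sum>a\<in>A. \<Sum>b\<in>B. \<Sum>c\<in>C. \<Sum>d\<in>D. f a b * g c d)"
    by (simp only: sum_distrib_left)
  finally show ?thesis by simp
qed

theorem mainTheorem5:
  fixes dA dB :: nat and \<beta> :: real
    and HiA HiB HfA HfB :: "complex mat"
    and miA miB mfA mfB :: nat
    and EiA EiB EfA EfB :: "nat \<Rightarrow> real"
    and PiA PiB PfA PfB :: "nat \<Rightarrow> complex mat"
    and \<Phi> :: "complex mat \<Rightarrow> complex mat"
    and \<E> :: "complex mat"
  assumes "dA \<ge> 1" and "dB \<ge> 1"
    and "spectral_decomp dA HiA miA EiA PiA"
    and "spectral_decomp dB HiB miB EiB PiB"
    and "spectral_decomp dA HfA mfA EfA PfA"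
    and "spectral_decomp dB HfB mfB EfB PfB"
    and "CPTP (dA * dB) \<Phi>"
    and "\<beta> > 0"
    and "\<E> \<in> carrier_mat (dA * dB) (dA * dB)" and "hermitian \<E>"
    and "ptrace_A dA dB \<E> = 0\<^sub>m dB dB" and "ptrace_B dA dB \<E> = 0\<^sub>m dA dA"
  shows
    "let ZiA = partition_fn \<beta> HiA; ZiB = partition_fn \<beta> HiB;
         ZfA = partition_fn \<beta> HfA; ZfB = partition_fn \<beta> HfB;
         \<gamma>i = kron (gibbs \<beta> HiA) (gibbs \<beta> HiB);
         \<gamma>f = kron (gibbs \<beta> HfA) (gibbs \<beta> HfB);
         \<Delta>F = - (1 / \<beta>) * ln ((ZfA * ZfB) / (ZiA * ZiB));
         \<rho>i = \<gamma>i + \<E>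
     in epm_avg \<rho>i \<Phi> miA EiA PiA miB EiB PiB mfA EfA PfA mfB EfB PfB
          (\<lambda>\<Delta>E. exp (- \<beta> * (\<Delta>E - \<Delta>F)))
        = (of_nat (dA * dB) + mtrace (minv \<gamma>i * \<E>))
          * (mtrace (\<gamma>f * \<Phi> \<gamma>i) + mtrace (\<gamma>f * \<Phi> \<E>))"
proof -
  note SiA = assms(3) and SiB = assms(4) and SfA = assms(5) and SfB = assms(6)
  have dB0: "dB > 0" using assms(2) by simp
  let ?N = "dA * dB"
  have PiA: "\<forall>l<miA. PiA l \<in> carrier_mat dA dA" using SiA unfolding spectral_decomp_def by auto
  have PiB: "\<forall>l<miB. PiB l \<in> carrier_mat dB dB" using SiB unfolding spectral_decomp_def by auto
  have PfA: "\<forall>l<mfA. PfA l \<in> carrier_mat dA dA" using SfA unfolding spectral_decomp_def by auto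
  have PfB: "\<forall>l<mfB. PfB l \<in> carrier_mat dB dB" using SfB unfolding spectral_decomp_def by auto
  define ZiA where "ZiA = partition_fn \<beta> HiA"
  define ZiB where "ZiB = partition_fn \<beta> HiB"
  define ZfA where "ZfA = partition_fn \<beta> HfA"
  define ZfB where "ZfB = partition_fn \<beta> HfB"
  have Zpos: "ZiA > 0" "ZiB > 0" "ZfA > 0" "ZfB > 0"
    unfolding ZiA_def ZiB_def ZfA_def ZfB_def
    using partition_pos[OF SiA assms(1)] partition_pos[OF SiB assms(2)]
      partition_pos[OF SfA assms(1)] partition_pos[OF SfB assms(2)] by auto
  define aA where "aA l = complex_of_real (exp (- \<beta> * EiA l) / ZiA)" for l
  define aB where "aB l = complex_of_real (exp (- \<beta> * EiB l) / ZiB)" for l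
  define cA where "cA l = complex_of_real (ZiA * exp (\<beta> * EiA l))" for l
  define cB where "cB l = complex_of_real (ZiB * exp (\<beta> * EiB l))" for l
  define wA where "wA l = complex_of_real (exp (- \<beta> * EfA l) / ZfA)" for l
  define wB where "wB l = complex_of_real (exp (- \<beta> * EfB l) / ZfB)" for l
  have gA: "gibbs \<beta> HiA = msum dA (\<lambda>l. aA l \<cdot>\<^sub>m PiA l) {..<miA}"
    unfolding aA_def ZiA_def by (rule gibbs_spec[OF SiA])
  have gB: "gibbs \<beta> HiB = msum dB (\<lambda>l. aB l \<cdot>\<^sub>m PiB l) {..<miB}"
    unfolding aB_def ZiB_def by (rule gibbs_spec[OF SiB])
  have fA: "gibbs \<beta> HfA = msum dA (\<lambda>l. wA l \<cdot>\<^sub>m PfA l) {..<mfA}"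
    unfolding wA_def ZfA_def by (rule gibbs_spec[OF SfA])
  have fB: "gibbs \<beta> HfB = msum dB (\<lambda>l. wB l \<cdot>\<^sub>m PfB l) {..<mfB}"
    unfolding wB_def ZfB_def by (rule gibbs_spec[OF SfB])
  define GA where "GA = msum dA (\<lambda>l. cA l \<cdot>\<^sub>m PiA l) {..<miA}"
  define GB where "GB = msum dB (\<lambda>l. cB l \<cdot>\<^sub>m PiB l) {..<miB}"
  have acA: "\<forall>l<miA. aA l * cA l = 1" "\<forall>l<miA. cA l * aA l = 1"
    using Zpos unfolding aA_def cA_def
    by (auto simp flip: of_real_mult simp: exp_minus field_simps)
  have acB: "\<forall>l<miB. aB l * cB l = 1" "\<forall>l<miB. cB l * aB l = 1"
    using Zpos unfolding aB_def cB_def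
    by (auto simp flip: of_real_mult simp: exp_minus field_simps)
  define \<gamma>i where "\<gamma>i = kron (gibbs \<beta> HiA) (gibbs \<beta> HiB)"
  define \<gamma>f where "\<gamma>f = kron (gibbs \<beta> HfA) (gibbs \<beta> HfB)"
  define G where "G = kron GA GB"
  have gAc: "gibbs \<beta> HiA \<in> carrier_mat dA dA" and gBc: "gibbs \<beta> HiB \<in> carrier_mat dB dB"
    and fAc: "gibbs \<beta> HfA \<in> carrier_mat dA dA" and fBc: "gibbs \<beta> HfB \<in> carrier_mat dB dB"
    and GAc: "GA \<in> carrier_mat dA dA" and GBc: "GB \<in> carrier_mat dB dB"
    unfolding gA gB fA fB GA_def GB_def by auto
  have \<gamma>ic: "\<gamma>i \<in> carrier_mat ?N ?N" unfolding \<gamma>i_def by (rule kron_carrier[OF gAc gBc])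
  have \<gamma>fc: "\<gamma>f \<in> carrier_mat ?N ?N" unfolding \<gamma>f_def by (rule kron_carrier[OF fAc fBc])
  have Gc: "G \<in> carrier_mat ?N ?N" unfolding G_def by (rule kron_carrier[OF GAc GBc])
  have inv1: "\<gamma>i * G = 1\<^sub>m ?N"
    unfolding \<gamma>i_def G_def kron_mult[OF gAc GAc gBc GBc]
    unfolding gA gB GA_def GB_def spec_inv[OF SiA acA(1)] spec_inv[OF SiB acB(1)]
    by (rule kron_one[OF dB0])
  have inv2: "G * \<gamma>i = 1\<^sub>m ?N"
    unfolding \<gamma>i_def G_def kron_mult[OF GAc gAc GBc gBc]
    unfolding gA gB GA_def GB_def spec_inv[OF SiA acA(2)] spec_inv[OF SiB acB(2)]
    by (rule kron_one[OF dB0])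
  have minv: "minv \<gamma>i = G"
  proof -
    have ex: "\<exists>B. B \<in> carrier_mat (dim_row \<gamma>i) (dim_row \<gamma>i) \<and> inverts_mat \<gamma>i B \<and> inverts_mat B \<gamma>i"
      using Gc \<gamma>ic inv1 inv2 by (intro exI[of _ G]) (auto simp: inverts_mat_def)
    define M where "M = minv \<gamma>i"
    have M: "M \<in> carrier_mat ?N ?N" "\<gamma>i * M = 1\<^sub>m ?N"
      using someI_ex[OF ex] \<gamma>ic unfolding M_def minv_def inverts_mat_def by auto
    have "M = (G * \<gamma>i) * M" using M by (simp add: inv2)
    also have "\<dots> = G * (\<gamma>i * M)" using M Gc \<gamma>ic by (simp add: assoc_mult_mat)
    also have "\<dots> = G" using M Gc by simp
    finally show ?thesis unfolding M_def .
  qed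
  define \<Delta>F where "\<Delta>F = - (1 / \<beta>) * ln ((ZfA * ZfB) / (ZiA * ZiB))"
  define \<rho> where "\<rho> = \<gamma>i + \<E>"
  have \<rho>c: "\<rho> \<in> carrier_mat ?N ?N" unfolding \<rho>_def using \<gamma>ic assms(9) by simp
  have CP: "\<forall>X \<in> carrier_mat ?N ?N. \<Phi> X \<in> carrier_mat ?N ?N"
    "\<forall>X \<in> carrier_mat ?N ?N. \<forall>Y \<in> carrier_mat ?N ?N. \<forall>c. \<Phi> (c \<cdot>\<^sub>m X + Y) = c \<cdot>\<^sub>m \<Phi> X + \<Phi> Y"
    using assms(7) unfolding CPTP_def by auto
  have \<Phi>\<rho>c: "\<Phi> \<rho> \<in> carrier_mat ?N ?N" using CP(1) \<rho>c by blast
  have \<Phi>\<gamma>c: "\<Phi> \<gamma>i \<in> carrier_mat ?N ?N" using CP(1) \<gamma>ic by blast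
  have \<Phi>Ec: "\<Phi> \<E> \<in> carrier_mat ?N ?N" using CP(1) assms(9) by blast
  have \<Phi>\<rho>: "\<Phi> \<rho> = \<Phi> \<gamma>i + \<Phi> \<E>"
  proof -
    have one: "1 \<cdot>\<^sub>m \<gamma>i = \<gamma>i" using \<gamma>ic by (intro eq_matI) auto
    have "\<Phi> \<rho> = \<Phi> (1 \<cdot>\<^sub>m \<gamma>i + \<E>)" unfolding \<rho>_def one ..
    also have "\<dots> = 1 \<cdot>\<^sub>m \<Phi> \<gamma>i + \<Phi> \<E>" using CP(2) \<gamma>ic assms(9) by blast
    also have "\<dots> = \<Phi> \<gamma>i + \<Phi> \<E>" using \<Phi>\<gamma>c
      by (metis (no_types) carrier_matD(1) carrier_matD(2) eq_matI index_smult_mat(1) index_smult_mat(2) index_smult_mat(3) mult_1)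
    finally show ?thesis .
  qed
  have expf: "complex_of_real (exp (- \<beta> * ((EfA kA + EfB kB - EiA lA - EiB lB) - \<Delta>F)))
      = (cA lA * cB lB) * (wA kA * wB kB)" for lA lB kA kB
    unfolding \<Delta>F_def cA_def cB_def wA_def wB_def
    using exp_factor[OF assms(8) Zpos, of "EfA kA" "EfB kB" "EiA lA" "EiB lB"]
    by (simp add: mult_ac)
  have "epm_avg \<rho> \<Phi> miA EiA PiA miB EiB PiB mfA EfA PfA mfB EfB PfB (\<lambda>\<Delta>E. exp (- \<beta> * (\<Delta>E - \<Delta>F)))
     = (\<Sum>lA<miA. \<Sum>lB<miB. \<Sum>kA<mfA. \<Sum>kB<mfB.
          (cA lA * cB lB * mtrace (\<rho> * kron (PiA lA) (PiB lB))) * (wA kA * wB kB * mtrace (\<Phi> \<rho> * kron (PfA kA) (PfB kB))))"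
    unfolding epm_avg_def expf by (simp add: mult_ac)
  also have "\<dots> = (\<Sum>lA<miA. \<Sum>lB<miB. cA lA * cB lB * mtrace (\<rho> * kron (PiA lA) (PiB lB)))
       * (\<Sum>kA<mfA. \<Sum>kB<mfB. wA kA * wB kB * mtrace (\<Phi> \<rho> * kron (PfA kA) (PfB kB)))"
    by (rule sum4_factor)
  also have "(\<Sum>lA<miA. \<Sum>lB<miB. cA lA * cB lB * mtrace (\<rho> * kron (PiA lA) (PiB lB))) = mtrace (\<rho> * G)"
    unfolding G_def GA_def GB_def by (rule trace_kron_msum[OF \<rho>c PiA PiB, symmetric])
  also have "(\<Sum>kA<mfA. \<Sum>kB<mfB. wA kA * wB kB * mtrace (\<Phi> \<rho> * kron (PfA kA) (PfB kB))) = mtrace (\<Phi> \<rho> * \<gamma>f)"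
    unfolding \<gamma>f_def fA fB by (rule trace_kron_msum[OF \<Phi>\<rho>c PfA PfB, symmetric])
  also have "mtrace (\<rho> * G) = of_nat ?N + mtrace (minv \<gamma>i * \<E>)"
  proof -
    have "\<rho> * G = \<gamma>i * G + \<E> * G" unfolding \<rho>_def using \<gamma>ic assms(9) Gc by (rule add_mult_distrib_mat)
    hence "mtrace (\<rho> * G) = mtrace (\<gamma>i * G) + mtrace (\<E> * G)"
      using \<gamma>ic assms(9) Gc by (simp add: mtrace_add[of _ ?N])
    also have "mtrace (\<E> * G) = mtrace (G * \<E>)" using assms(9) Gc by (rule mtrace_mult_comm)
    finally show ?thesis using inv1 minv by (simp add: mtrace_one)
  qed
  also have "mtrace (\<Phi> \<rho> * \<gamma>f) = mtrace (\<gamma>f * \<Phi> \<gamma>i) + mtrace (\<gamma>f * \<Phi> \<E>)"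
  proof -
    have "\<Phi> \<rho> * \<gamma>f = \<Phi> \<gamma>i * \<gamma>f + \<Phi> \<E> * \<gamma>f" unfolding \<Phi>\<rho> using \<Phi>\<gamma>c \<Phi>Ec \<gamma>fc by (rule add_mult_distrib_mat)
    hence "mtrace (\<Phi> \<rho> * \<gamma>f) = mtrace (\<Phi> \<gamma>i * \<gamma>f) + mtrace (\<Phi> \<E> * \<gamma>f)"
      using \<Phi>\<gamma>c \<Phi>Ec \<gamma>fc by (simp add: mtrace_add[of _ ?N])
    also have "mtrace (\<Phi> \<gamma>i * \<gamma>f) = mtrace (\<gamma>f * \<Phi> \<gamma>i)" using \<Phi>\<gamma>c \<gamma>fc by (rule mtrace_mult_comm)
    also have "mtrace (\<Phi> \<E> * \<gamma>f) = mtrace (\<gamma>f * \<Phi> \<E>)" using \<Phi>Ec \<gamma>fc by (rule mtrace_mult_comm)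
    finally show ?thesis .
  qed
  finally have main: "epm_avg \<rho> \<Phi> miA EiA PiA miB EiB PiB mfA EfA PfA mfB EfB PfB (\<lambda>\<Delta>E. exp (- \<beta> * (\<Delta>E - \<Delta>F)))
      = (of_nat ?N + mtrace (minv \<gamma>i * \<E>)) * (mtrace (\<gamma>f * \<Phi> \<gamma>i) + mtrace (\<gamma>f * \<Phi> \<E>))" .
  show ?thesis unfolding Let_def
    using main unfolding \<rho>_def \<gamma>i_def \<gamma>f_def \<Delta>F_def ZiA_def ZiB_def ZfA_def ZfB_def .
qed

end
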